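(* Fix $\theta\ge1$. Let $A$ be a finitely generated free abelian group, let $S$ be a symmetric finite generating set for $A$, and let $T$ be a finite subset of $A$ such that the subgroup $\langle T\rangle$ has finite index in $A$. For $N\in\mathbb{N}$ let $T_N=\{t^{\pm N}\mid t\in T\}$. Then for all sufficiently large $N$, only finitely many words in the letters $S$ are $\theta$-efficient for the word metric on $A$ associated to the generating set $S\cup T_N$.
   Context: Given a group with a symmetric finite generating set $Y$ and associated word metric $d$, a word $w=a_1\cdots a_l$ in letters from a subset of $Y$ is $\theta$-efficient if $l\le\theta\, d(1,w)$, where $d(1,w)$ is the word length (with respect to $Y$) of the element represented by $w$. *)

theory Defs
  imports Complex_Main "HOL-Library.Function_Algebras"
begin

text \<open>The free abelian group of rank n, realised as Z^n: integer vectors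
  indexed by nat with support in {..<n}; the group operation is pointwise addition.\<close>
definition Zn :: "nat \<Rightarrow> (nat \<Rightarrow> int) set" where
  "Zn n = {v. \<forall>i\<ge>n. v i = 0}"

definition symmetric_gen_set :: "nat \<Rightarrow> (nat \<Rightarrow> int) set \<Rightarrow> bool" where
  "symmetric_gen_set n Y \<longleftrightarrow> Y \<subseteq> Zn n \<and> (\<forall>y\<in>Y. - y \<in> Y)
     \<and> (\<forall>x\<in>Zn n. \<exists>w. set w \<subseteq> Y \<and> sum_list w = x)"

definition gen_subgroup :: "(nat \<Rightarrow> int) set \<Rightarrow> (nat \<Rightarrow> int) set" where
  "gen_subgroup T = {x. \<exists>w. set w \<subseteq> T \<union> uminus ` T \<and> sum_list w = x}"

definition finite_index :: "nat \<Rightarrow> (nat \<Rightarrow> int) set \<Rightarrow> bool" where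
  "finite_index n H \<longleftrightarrow> finite {(\<lambda>h. x + h) ` H | x. x \<in> Zn n}"

definition powset :: "nat \<Rightarrow> (nat \<Rightarrow> int) set \<Rightarrow> (nat \<Rightarrow> int) set" where
  "powset N T = {(\<lambda>i. int N * t i) | t. t \<in> T} \<union> {(\<lambda>i. - (int N * t i)) | t. t \<in> T}"

definition word_length :: "(nat \<Rightarrow> int) set \<Rightarrow> (nat \<Rightarrow> int) \<Rightarrow> nat" where
  "word_length Y x = (LEAST l. \<exists>w. set w \<subseteq> Y \<and> length w = l \<and> sum_list w = x)"

definition efficient :: "real \<Rightarrow> (nat \<Rightarrow> int) set \<Rightarrow> (nat \<Rightarrow> int) list \<Rightarrow> bool" where
  "efficient \<theta> Y w \<longleftrightarrow> real (length w) \<le> \<theta> * real (word_length Y (sum_list w))"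

end

theory Submission
  imports Defs
begin

definition smul :: "int \<Rightarrow> (nat \<Rightarrow> int) \<Rightarrow> (nat \<Rightarrow> int)" where
  "smul c v = (\<lambda>j. c * v j)"
definition ev :: "nat \<Rightarrow> nat \<Rightarrow> int" where
  "ev i = (\<lambda>j. if j = i then 1 else 0)"
definition rep :: "(nat \<Rightarrow> int) set \<Rightarrow> (nat \<Rightarrow> int) \<Rightarrow> nat \<Rightarrow> bool" where
  "rep Y x k \<longleftrightarrow> (\<exists>w. set w \<subseteq> Y \<and> length w \<le> k \<and> sum_list w = x)"

lemma sum_fun_apply: "(\<Sum>i<(k::nat). (f i :: nat \<Rightarrow> int)) j = (\<Sum>i<k. f i j)"
  by (induct k) auto

lemma rep_zero: "rep Y 0 k"
  unfolding rep_def by (rule exI[of _ "[]"]) auto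

lemma rep_add: "rep Y x a \<Longrightarrow> rep Y y b \<Longrightarrow> rep Y (x + y) (a + b)"
  unfolding rep_def
  by (metis add_mono le_sup_iff length_append set_append sum_list_append)

lemma rep_mono: "rep Y x a \<Longrightarrow> a \<le> b \<Longrightarrow> rep Y x b"
  unfolding rep_def using order_trans by blast

lemma rep_sub: "Y \<subseteq> Y' \<Longrightarrow> rep Y x k \<Longrightarrow> rep Y' x k"
  unfolding rep_def by blast

lemma rep_nat: "rep Y x k \<Longrightarrow> rep Y (smul (int c) x) (c * k)"
proof (induct c)
  case 0
  have "smul (int 0) x = 0" by (auto simp: smul_def)
  then show ?case using rep_zero[of Y "0*k"] by metis
next
  case (Suc c)
  have "smul (int (Suc c)) x = x + smul (int c) x" by (auto simp: smul_def algebra_simps)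
  then show ?case using rep_add[OF Suc(2) Suc(1)[OF Suc(2)]] by (metis mult_Suc)
qed

lemma rep_neg: "\<forall>y\<in>Y. - y \<in> Y \<Longrightarrow> rep Y x k \<Longrightarrow> rep Y (- x) k"
proof -
  assume s: "\<forall>y\<in>Y. - y \<in> Y" and "rep Y x k"
  then obtain w where w: "set w \<subseteq> Y" "length w \<le> k" "sum_list w = x" unfolding rep_def by blast
  have "sum_list (map uminus w) = - sum_list w" by (induct w) auto
  moreover have "set (map uminus w) \<subseteq> Y" using w s by auto
  ultimately show ?thesis unfolding rep_def using w by (metis length_map)
qed

lemma rep_int: "\<forall>y\<in>Y. - y \<in> Y \<Longrightarrow> rep Y x k \<Longrightarrow> rep Y (smul c x) (nat \<bar>c\<bar> * k)"
proof (cases "c \<ge> 0")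
  case True
  assume "rep Y x k"
  then show ?thesis using rep_nat[of Y x k "nat c"] True by simp
next
  case False
  assume s: "\<forall>y\<in>Y. - y \<in> Y" and r: "rep Y x k"
  have "smul c x = smul (int (nat \<bar>c\<bar>)) (- x)" using False by (auto simp: smul_def)
  then show ?thesis using rep_nat[OF rep_neg[OF s r], of "nat \<bar>c\<bar>"] by simp
qed

lemma rep_sum: "(\<forall>i<(k::nat). rep Y (f i) (b i)) \<Longrightarrow> rep Y (\<Sum>i<k. f i) (\<Sum>i<k. b i)"
  by (induct k) (auto simp: rep_zero intro: rep_add)

lemma wl_le: "rep Y x k \<Longrightarrow> word_length Y x \<le> k"
proof -
  assume "rep Y x k"
  then obtain w where w: "set w \<subseteq> Y" "length w \<le> k" "sum_list w = x" unfolding rep_def by blast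
  have "word_length Y x \<le> length w" unfolding word_length_def
    by (rule Least_le) (use w in blast)
  then show ?thesis using w by simp
qed

lemma decomp: "x \<in> Zn n \<Longrightarrow> x = (\<Sum>i<n. smul (x i) (ev i))"
proof (rule ext)
  fix j assume x: "x \<in> Zn n"
  have "(\<Sum>i<n. smul (x i) (ev i)) j = (\<Sum>i\<in>{..<n}. if j = i then x i else 0)"
    unfolding sum_fun_apply by (rule sum.cong) (auto simp: smul_def ev_def)
  also have "\<dots> = (if j \<in> {..<n} then x j else 0)" by simp
  also have "\<dots> = x j" using x by (auto simp: Zn_def)
  finally show "x j = (\<Sum>i<n. smul (x i) (ev i)) j" by simp
qed

lemma coord_bound:
  assumes "set w \<subseteq> S" "\<forall>s\<in>S. \<forall>j. \<bar>s j\<bar> \<le> B"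
  shows "\<bar>sum_list w j\<bar> \<le> int (length w) * B"
  using assms
proof (induct w)
  case Nil then show ?case by simp
next
  case (Cons a w)
  then have "\<bar>a j\<bar> \<le> B" by auto
  moreover have "\<bar>sum_list w j\<bar> \<le> int (length w) * B" using Cons by auto
  ultimately show ?case by (auto simp: algebra_simps)
qed

lemma sum_in_Zn: "set w \<subseteq> Zn n \<Longrightarrow> sum_list w \<in> Zn n"
  by (induct w) (auto simp: Zn_def)

lemma div_bound:
  fixes a q M N m :: int
  assumes "M = N * m" "m \<ge> 1" "N \<ge> 1" "q = a div M"
  shows "\<bar>q\<bar> * N \<le> \<bar>a\<bar> + N"
proof -
  have M: "M > 0" using assms by (simp add: pos_add_strict mult_pos_pos)
  have e: "a = q * M + a mod M" using assms(4) by simp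
  have r: "0 \<le> a mod M" "a mod M < M" using M by auto
  show ?thesis
  proof (cases "q \<ge> 0")
    case True
    have "q * N \<le> q * M" using True assms by (simp add: mult_left_mono)
    also have "\<dots> \<le> a" using e r by linarith
    moreover have "a \<le> \<bar>a\<bar>" by simp
    ultimately show ?thesis using True assms(3) by simp
  next
    case False
    have "(- q - 1) * M < - a" using e r by (simp add: algebra_simps)
    moreover have "(- q - 1) * N \<le> (- q - 1) * M" using False assms by (simp add: mult_left_mono)
    ultimately have "(- q - 1) * N \<le> \<bar>a\<bar>" by linarith
    then show ?thesis using False by (simp add: algebra_simps)
  qed
qed

lemma zero_in_gen: "0 \<in> gen_subgroup T"
  unfolding gen_subgroup_def by (rule CollectI, rule exI[of _ "[]"]) auto

lemma idx:
  assumes fi: "finite_index n (gen_subgroup T)" and i: "i < n"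
  shows "\<exists>m::nat. m > 0 \<and> smul (int m) (ev i) \<in> gen_subgroup T"
proof -
  let ?H = "gen_subgroup T"
  define f where "f k = (\<lambda>h. smul (int k) (ev i) + h) ` ?H" for k :: nat
  have "range f \<subseteq> {(\<lambda>h. x + h) ` ?H | x. x \<in> Zn n}"
  proof
    fix C assume "C \<in> range f"
    then obtain k where "C = f k" by blast
    moreover have "smul (int k) (ev i) \<in> Zn n" using i by (auto simp: Zn_def smul_def ev_def)
    ultimately show "C \<in> {(\<lambda>h. x + h) ` ?H | x. x \<in> Zn n}" unfolding f_def by blast
  qed
  then have fin: "finite (range f)" using fi unfolding finite_index_def by (rule finite_subset)
  have "\<not> inj f"
  proof
    assume "inj f"
    then have "finite (UNIV :: nat set)" using fin finite_imageD by blast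
    then show False by simp
  qed
  then obtain j k where jk: "j \<noteq> k" "f j = f k" unfolding inj_def by blast
  have key: "\<exists>m::nat. m > 0 \<and> smul (int m) (ev i) \<in> ?H" if "j' < k'" "f j' = f k'" for j' k'
  proof -
    have "smul (int k') (ev i) \<in> f k'" unfolding f_def using zero_in_gen[of T]
      by (metis (no_types, lifting) add.right_neutral image_eqI)
    then have "smul (int k') (ev i) \<in> f j'" using that by simp
    then obtain h where h: "h \<in> ?H" "smul (int k') (ev i) = smul (int j') (ev i) + h"
      unfolding f_def by blast
    have "h = smul (int (k' - j')) (ev i)"
    proof
      fix t
      have "int k' * ev i t = int j' * ev i t + h t" using h(2) unfolding smul_def
        by (metis plus_fun_apply)
      then show "h t = smul (int (k' - j')) (ev i) t" using that(1)
        by (simp add: smul_def of_nat_diff algebra_simps)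
    qed
    then show ?thesis using h(1) that(1) by (intro exI[of _ "k' - j'"]) auto
  qed
  show ?thesis
  proof (cases "j < k")
    case True then show ?thesis using key jk by blast
  next
    case False then have "k < j" using jk by simp
    then show ?thesis using key jk by metis
  qed
qed

lemma smul_add: "smul c (a + b) = smul c a + smul c b"
  by (auto simp: smul_def algebra_simps)

lemma scale_word:
  "set u \<subseteq> T \<union> uminus ` T \<Longrightarrow>
   set (map (smul (int N)) u) \<subseteq> powset N T \<and> sum_list (map (smul (int N)) u) = smul (int N) (sum_list u)"
proof (induct u)
  case Nil then show ?case by (auto simp: smul_def)
next
  case (Cons a u)
  have "smul (int N) a \<in> powset N T"
  proof -
    have "a \<in> T \<or> a \<in> uminus ` T" using Cons(2) by (metis Un_iff insert_subset list.set(2))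
    then show ?thesis
    proof
      assume "a \<in> T" then show ?thesis unfolding powset_def smul_def by blast
    next
      assume "a \<in> uminus ` T"
      then obtain t where "t \<in> T" "a = - t" by blast
      then have "smul (int N) a = (\<lambda>i. - (int N * t i))" by (auto simp: smul_def)
      then show ?thesis unfolding powset_def using \<open>t \<in> T\<close> by blast
    qed
  qed
  moreover have "set (map (smul (int N)) u) \<subseteq> powset N T" using Cons(1) Cons(2) by simp
  moreover have "sum_list (map (smul (int N)) (a # u)) = smul (int N) (sum_list (a # u))"
    using Cons(1) Cons(2) by (simp only: list.map sum_list.Cons smul_add) simp
  ultimately show ?case by (metis insert_subset list.set(2) list.map(2))
qed

lemma coord_rep:
  assumes sym: "\<forall>y\<in>Y. - y \<in> Y" and SY: "S \<subseteq> Y"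
    and rU: "rep Y (smul M (ev i)) L" and rK: "rep S (ev i) K" and M: "M > 0"
  shows "rep Y (smul a (ev i)) (nat \<bar>a div M\<bar> * L + nat (a mod M) * K)"
proof -
  have e: "smul a (ev i) = smul (a div M) (smul M (ev i)) + smul (int (nat (a mod M))) (ev i)"
  proof
    fix t
    have "a = a div M * M + a mod M" by simp
    then have "a * ev i t = a div M * (M * ev i t) + a mod M * ev i t"
      by (metis distrib_right mult.assoc)
    then show "smul a (ev i) t = (smul (a div M) (smul M (ev i)) + smul (int (nat (a mod M))) (ev i)) t"
      using M by (simp add: smul_def)
  qed
  have "rep Y (smul (a div M) (smul M (ev i))) (nat \<bar>a div M\<bar> * L)" by (rule rep_int[OF sym rU])
  moreover have "rep Y (smul (int (nat (a mod M))) (ev i)) (nat (a mod M) * K)"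
    by (rule rep_nat[OF rep_sub[OF SY rK]])
  ultimately show ?thesis unfolding e by (rule rep_add)
qed

theorem lemma5p1:
  fixes \<theta> :: real and n :: nat and S T :: "(nat \<Rightarrow> int) set"
  assumes "\<theta> \<ge> 1"
    and "finite S" and "symmetric_gen_set n S"
    and "finite T" and "T \<subseteq> Zn n"
    and "finite_index n (gen_subgroup T)"
  shows "\<exists>N0. \<forall>N\<ge>N0. finite {w. set w \<subseteq> S \<and> efficient \<theta> (S \<union> powset N T) w}"
proof -
  note sg = assms(3)[unfolded symmetric_gen_set_def]
  define B :: int where "B = (\<Sum>s\<in>S. \<Sum>j<n. \<bar>s j\<bar>)"
  have B0: "B \<ge> 0" unfolding B_def by (intro sum_nonneg) auto
  have Bb: "\<forall>s\<in>S. \<forall>j. \<bar>s j\<bar> \<le> B"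
  proof (intro ballI allI)
    fix s j assume s: "s \<in> S"
    show "\<bar>s j\<bar> \<le> B"
    proof (cases "j < n")
      case True
      have "\<bar>s j\<bar> \<le> (\<Sum>j<n. \<bar>s j\<bar>)" using True by (intro member_le_sum) auto
      also have "\<dots> \<le> B" unfolding B_def using s assms(2)
        by (intro member_le_sum[where f = "\<lambda>s. \<Sum>j<n. \<bar>s j\<bar>"]) (auto intro: sum_nonneg)
      finally show ?thesis .
    next
      case False
      then have "s j = 0" using s sg by (auto simp: Zn_def)
      then show ?thesis using B0 by simp
    qed
  qed
  have "\<forall>i\<in>{..<n}. \<exists>m::nat. m > 0 \<and> smul (int m) (ev i) \<in> gen_subgroup T"
    using idx[OF assms(6)] by blast
  then obtain m where m: "\<forall>i\<in>{..<n}. m i > 0 \<and> smul (int (m i)) (ev i) \<in> gen_subgroup T"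
    by (metis bchoice)
  have "\<forall>i\<in>{..<n}. \<exists>u. set u \<subseteq> T \<union> uminus ` T \<and> sum_list u = smul (int (m i)) (ev i)"
    using m unfolding gen_subgroup_def by blast
  then obtain u where u: "\<forall>i\<in>{..<n}. set (u i) \<subseteq> T \<union> uminus ` T \<and> sum_list (u i) = smul (int (m i)) (ev i)"
    by (metis bchoice)
  have "\<forall>i\<in>{..<n}. \<exists>w. set w \<subseteq> S \<and> sum_list w = ev i"
  proof
    fix i assume "i \<in> {..<n}"
    then have "ev i \<in> Zn n" by (auto simp: Zn_def ev_def)
    then show "\<exists>w. set w \<subseteq> S \<and> sum_list w = ev i" using sg by blast
  qed
  then obtain sw where sw: "\<forall>i\<in>{..<n}. set (sw i) \<subseteq> S \<and> sum_list (sw i) = ev i"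
    by (metis bchoice)
  define L where "L i = length (u i)" for i
  define K where "K i = length (sw i)" for i
  define P :: nat where "P = (\<Sum>i<n. L i)"
  define Q :: nat where "Q = (\<Sum>i<n. m i * K i)"
  define N0 :: nat where "N0 = nat \<lceil>2 * \<theta> * real_of_int B * real P\<rceil> + 1"
  show ?thesis
  proof (intro exI allI impI)
    fix N assume N: "N \<ge> N0"
    then have N1: "N \<ge> 1" unfolding N0_def by simp
    have NN: "real N \<ge> 2 * \<theta> * real_of_int B * real P" using N unfolding N0_def by linarith
    define Y where "Y = S \<union> powset N T"
    have sym: "\<forall>y\<in>Y. - y \<in> Y"
    proof
      fix y assume "y \<in> Y"
      then show "- y \<in> Y" unfolding Y_def powset_def using sg by (auto simp: fun_Compl_def)
    qed
    have SY: "S \<subseteq> Y" unfolding Y_def by blast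
    define M where "M i = int N * int (m i)" for i
    have Mpos: "\<forall>i<n. M i > 0" using m N1 unfolding M_def by auto
    have rU: "\<forall>i<n. rep Y (smul (M i) (ev i)) (L i)"
    proof (intro allI impI)
      fix i assume i: "i < n"
      have "smul (M i) (ev i) = smul (int N) (smul (int (m i)) (ev i))"
        unfolding M_def smul_def by (auto simp: algebra_simps)
      then show "rep Y (smul (M i) (ev i)) (L i)"
        using scale_word[of "u i" T N] u i unfolding rep_def L_def Y_def
        by (intro exI[of _ "map (smul (int N)) (u i)"]) auto
    qed
    have rK: "\<forall>i<n. rep S (ev i) (K i)" using sw unfolding rep_def K_def by auto
    define bound where "bound = nat \<lceil>2 * \<theta> * (real P + real N * real Q)\<rceil>"
    have sub: "{w. set w \<subseteq> S \<and> efficient \<theta> Y w} \<subseteq> {w. set w \<subseteq> S \<and> length w \<le> bound}"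
    proof safe
      fix w x assume wS: "set w \<subseteq> S" and eff: "efficient \<theta> Y w"
      define l where "l = length w"
      define z where "z = sum_list w"
      have zZ: "z \<in> Zn n" unfolding z_def using wS sg sum_in_Zn by blast
      have zb: "\<forall>j. \<bar>z j\<bar> \<le> int l * B" unfolding z_def l_def using coord_bound[OF wS Bb] by blast
      define D where "D = (\<Sum>i<n. nat \<bar>z i div M i\<bar> * L i + nat (z i mod M i) * K i)"
      have "rep Y z D"
      proof -
        have "rep Y (\<Sum>i<n. smul (z i) (ev i)) D" unfolding D_def
          using coord_rep[OF sym SY] rU rK Mpos by (intro rep_sum) blast
        then show ?thesis using decomp[OF zZ] by simp
      qed
      then have dD: "word_length Y z \<le> D" by (rule wl_le)
      have "int N * int D \<le> (int l * B + int N) * int P + int N * int N * int Q"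
      proof -
        have "int N * int D = (\<Sum>i<n. int N * (\<bar>z i div M i\<bar> * int (L i) + (z i mod M i) * int (K i)))"
          unfolding D_def using Mpos by (simp add: sum_distrib_left)
        also have "\<dots> \<le> (\<Sum>i<n. (int l * B + int N) * int (L i) + int N * int N * (int (m i * K i)))"
        proof (rule sum_mono)
          fix i assume i: "i \<in> {..<n}"
          have "m i > 0" using m i by blast
          then have m1: "int (m i) \<ge> 1" by linarith
          have q: "\<bar>z i div M i\<bar> * int N \<le> \<bar>z i\<bar> + int N"
            by (rule div_bound[OF M_def m1]) (use N1 in auto)
          have r: "z i mod M i \<le> M i" using Mpos i by (simp add: order_less_imp_le)
          have "int N * (\<bar>z i div M i\<bar> * int (L i)) = (\<bar>z i div M i\<bar> * int N) * int (L i)" by simp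
          also have "\<dots> \<le> (\<bar>z i\<bar> + int N) * int (L i)" by (rule mult_right_mono[OF q]) simp
          also have "\<dots> \<le> (int l * B + int N) * int (L i)" using zb by (intro mult_right_mono) auto
          finally have A: "int N * (\<bar>z i div M i\<bar> * int (L i)) \<le> (int l * B + int N) * int (L i)" .
          have "int N * (z i mod M i * int (K i)) \<le> int N * (M i * int (K i))"
            using r by (intro mult_left_mono mult_right_mono) auto
          also have "\<dots> = int N * int N * (int (m i * K i))" unfolding M_def by simp
          finally have C: "int N * (z i mod M i * int (K i)) \<le> int N * int N * (int (m i * K i))" .
          show "int N * (\<bar>z i div M i\<bar> * int (L i) + z i mod M i * int (K i))
                \<le> (int l * B + int N) * int (L i) + int N * int N * int (m i * K i)"
            using A C by (simp add: distrib_left)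
        qed
        also have "\<dots> = (int l * B + int N) * int P + int N * int N * int Q"
          unfolding P_def Q_def by (simp add: sum.distrib sum_distrib_left)
        finally show ?thesis .
      qed
      then have ineq: "real N * real D \<le> (real l * real_of_int B + real N) * real P + real N * real N * real Q"
        by (metis (mono_tags, opaque_lifting) of_int_le_iff of_int_add of_int_mult of_int_of_nat_eq)
      have "real l \<le> \<theta> * real (word_length Y z)" using eff unfolding efficient_def l_def z_def .
      also have "\<dots> \<le> \<theta> * real D" using dD assms(1) by (intro mult_left_mono) auto
      finally have lD: "real l \<le> \<theta> * real D" .
      have "real N * real l \<le> real N * (\<theta> * real D)" using lD by (intro mult_left_mono) auto
      also have "\<dots> = \<theta> * (real N * real D)" by (simp add: algebra_simps)
      also have "\<dots> \<le> \<theta> * ((real l * real_of_int B + real N) * real P + real N * real N * real Q)"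
        using ineq assms(1) by (intro mult_left_mono) auto
      also have "\<dots> = (\<theta> * real_of_int B * real P) * real l + \<theta> * real N * (real P + real N * real Q)"
        by (simp add: algebra_simps)
      also have "\<dots> \<le> (real N / 2) * real l + \<theta> * real N * (real P + real N * real Q)"
        using NN by (intro add_right_mono mult_right_mono) auto
      finally have "real N * real l / 2 \<le> real N * (\<theta> * (real P + real N * real Q))"
        by (simp add: algebra_simps)
      then have "real N * real l \<le> real N * (2 * \<theta> * (real P + real N * real Q))"
        by (simp add: algebra_simps)
      then have "real l \<le> 2 * \<theta> * (real P + real N * real Q)" using N1
        by (meson mult_left_le_imp_le of_nat_0_less_iff less_le_trans zero_less_one)
      then show "length w \<le> bound" unfolding bound_def l_def by linarith
    qed
    have "finite {w. set w \<subseteq> S \<and> length w \<le> bound}" by (rule finite_lists_length_le[OF assms(2)])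
    then show "finite {w. set w \<subseteq> S \<and> efficient \<theta> (S \<union> powset N T) w}"
      using sub unfolding Y_def by (rule finite_subset[rotated])
  qed
qed

end
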